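(* Let $T=(V,E)$ be a decision tree with root $r$. Define $w:V\to\mathbb{R}_{\ge0}$ by $w_v=0$ for every leaf $v$ and, recursively for every internal node $v$ with children $C_v$, $w_v$ equal to the optimal value of the semidefinite program \[\min\ \max_{c\in C_v}\big(w_c+X[c,c]+Y[c,c]\big)\quad\text{s.t.}\quad X[c_1,c_2]-Y[c_1,c_2]=1\ \ (c_1,c_2\in C_v,\ c_1\ne c_2),\qquad 0\preceq X,Y\in\mathbb{R}^{C_v\times C_v}.\] Then $w$ is an optimal weighting scheme for $T$, i.e. $w$ is a weighting scheme and $w_r=\mathsf{WDT}(T)$.
   Context: A decision tree is a finite rooted tree whose internal nodes each query a coordinate of the input and whose children correspond to distinct query outcomes; leaves carry outputs. A weighting scheme for $T$ is $w:V\to\mathbb{R}_{\ge0}$ such that $w_v=0$ for all leaves and, for every internal node $v$ with children $C_v$, there exist positive semidefinite $X,Y\in\mathbb{C}^{C_v\times C_v}$ with $X[c_1,c_2]-Y[c_1,c_2]=1$ for all distinct $c_1,c_2\in C_v$ and $w_v-w_c\ge X[c,c]+Y[c,c]$ for all $c\in C_v$. $\mathsf{WDT}(T)$ is the minimum of $w_r$ over all weighting schemes $w$ for $T$. *)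

theory Defs
  imports Complex_Main
begin

text \<open>A finite rooted tree on vertex set V with root r, given by a children map ch.
  Only the tree shape of a decision tree matters for weighting schemes.\<close>
definition rooted_tree :: "'v set \<Rightarrow> 'v \<Rightarrow> ('v \<Rightarrow> 'v set) \<Rightarrow> bool" where
  "rooted_tree V r ch \<longleftrightarrow>
     finite V \<and> r \<in> V \<and> (\<forall>v\<in>V. ch v \<subseteq> V) \<and> (\<forall>v\<in>V. r \<notin> ch v) \<and>
     (\<forall>u\<in>V - {r}. \<exists>!p. p \<in> V \<and> u \<in> ch p) \<and>
     (\<forall>v\<in>V. (r, v) \<in> {(a, b). a \<in> V \<and> b \<in> ch a}\<^sup>*)"

definition is_leaf :: "('v \<Rightarrow> 'v set) \<Rightarrow> 'v \<Rightarrow> bool" where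
  "is_leaf ch v \<longleftrightarrow> ch v = {}"

definition psd_complex :: "'v set \<Rightarrow> ('v \<Rightarrow> 'v \<Rightarrow> complex) \<Rightarrow> bool" where
  "psd_complex C X \<longleftrightarrow>
     (\<forall>z :: 'v \<Rightarrow> complex.
        Im (\<Sum>a\<in>C. \<Sum>b\<in>C. cnj (z a) * X a b * z b) = 0 \<and>
        0 \<le> Re (\<Sum>a\<in>C. \<Sum>b\<in>C. cnj (z a) * X a b * z b))"

definition psd_real :: "'v set \<Rightarrow> ('v \<Rightarrow> 'v \<Rightarrow> real) \<Rightarrow> bool" where
  "psd_real C X \<longleftrightarrow>
     (\<forall>a\<in>C. \<forall>b\<in>C. X a b = X b a) \<and>
     (\<forall>z :: 'v \<Rightarrow> real. 0 \<le> (\<Sum>a\<in>C. \<Sum>b\<in>C. z a * X a b * z b))"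

definition weighting_scheme :: "'v set \<Rightarrow> ('v \<Rightarrow> 'v set) \<Rightarrow> ('v \<Rightarrow> real) \<Rightarrow> bool" where
  "weighting_scheme V ch w \<longleftrightarrow>
     (\<forall>v\<in>V. 0 \<le> w v) \<and>
     (\<forall>v\<in>V. is_leaf ch v \<longrightarrow> w v = 0) \<and>
     (\<forall>v\<in>V. \<not> is_leaf ch v \<longrightarrow>
        (\<exists>X Y. psd_complex (ch v) X \<and> psd_complex (ch v) Y \<and>
           (\<forall>c1\<in>ch v. \<forall>c2\<in>ch v. c1 \<noteq> c2 \<longrightarrow> X c1 c2 - Y c1 c2 = 1) \<and>
           (\<forall>c\<in>ch v. Re (X c c) + Re (Y c c) \<le> w v - w c)))"

definition WDT :: "'v set \<Rightarrow> 'v \<Rightarrow> ('v \<Rightarrow> 'v set) \<Rightarrow> real" where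
  "WDT V r ch = Inf {w r | w. weighting_scheme V ch w}"

definition sdp_value :: "'v set \<Rightarrow> ('v \<Rightarrow> real) \<Rightarrow> real" where
  "sdp_value C w = Inf {Max ((\<lambda>c. w c + X c c + Y c c) ` C) | X Y.
       psd_real C X \<and> psd_real C Y \<and>
       (\<forall>c1\<in>C. \<forall>c2\<in>C. c1 \<noteq> c2 \<longrightarrow> X c1 c2 - Y c1 c2 = 1)}"

end

theory Submission
  imports Defs "HOL-Analysis.Analysis"
begin


lemma dsum_restrict:
  fixes F :: "'v \<Rightarrow> 'v \<Rightarrow> 'b::comm_monoid_add"
  assumes "finite C" "S \<subseteq> C" "\<And>x y. x \<notin> S \<or> y \<notin> S \<Longrightarrow> F x y = 0"
  shows "(\<Sum>x\<in>C. \<Sum>y\<in>C. F x y) = (\<Sum>x\<in>S. \<Sum>y\<in>S. F x y)"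
proof -
  have "(\<Sum>x\<in>C. \<Sum>y\<in>C. F x y) = (\<Sum>x\<in>C. \<Sum>y\<in>S. F x y)"
    by (rule sum.cong[OF refl], rule sum.mono_neutral_right) (use assms in auto)
  also have "\<dots> = (\<Sum>x\<in>S. \<Sum>y\<in>S. F x y)"
    by (rule sum.mono_neutral_right) (use assms in auto)
  finally show ?thesis .
qed

lemma psd_realD: "psd_real C X \<Longrightarrow> 0 \<le> (\<Sum>a\<in>C. \<Sum>b\<in>C. z a * X a b * z b)"
  unfolding psd_real_def by blast
lemma psd_realS: "psd_real C X \<Longrightarrow> a \<in> C \<Longrightarrow> b \<in> C \<Longrightarrow> X a b = X b a"
  unfolding psd_real_def by blast
lemma psd_complexD: "psd_complex C X \<Longrightarrow> Im (\<Sum>a\<in>C. \<Sum>b\<in>C. cnj (z a) * X a b * z b) = 0 \<and> 0 \<le> Re (\<Sum>a\<in>C. \<Sum>b\<in>C. cnj (z a) * X a b * z b)"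
  unfolding psd_complex_def by blast

lemma psd_diag:
  assumes "finite C" "psd_real C X" "a \<in> C"
  shows "0 \<le> X a a"
proof -
  let ?z = "\<lambda>x. if x = a then 1 else (0::real)"
  have "0 \<le> (\<Sum>x\<in>C. \<Sum>y\<in>C. ?z x * X x y * ?z y)" by (rule psd_realD[OF assms(2)])
  also have "\<dots> = (\<Sum>x\<in>{a}. \<Sum>y\<in>{a}. ?z x * X x y * ?z y)"
    by (rule dsum_restrict) (use assms in auto)
  finally show ?thesis by simp
qed

lemma psd_off:
  assumes "finite C" "psd_real C X" "a \<in> C" "b \<in> C"
  shows "\<bar>X a b\<bar> \<le> (X a a + X b b) / 2"
proof (cases "a = b")
  case True then show ?thesis using psd_diag[OF assms(1,2,3)] by simp
next
  case False
  have sym: "X b a = X a b" using assms unfolding psd_real_def by blast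
  have q: "0 \<le> X a a + X b b + 2 * s * X a b"
    if "s * s = 1" for s :: real
  proof -
    let ?z = "\<lambda>x. if x = a then 1 else if x = b then s else (0::real)"
    have "0 \<le> (\<Sum>x\<in>C. \<Sum>y\<in>C. ?z x * X x y * ?z y)" by (rule psd_realD[OF assms(2)])
    also have "\<dots> = (\<Sum>x\<in>{a,b}. \<Sum>y\<in>{a,b}. ?z x * X x y * ?z y)"
      by (rule dsum_restrict) (use assms in auto)
    also have "\<dots> = X a a + s * X a b + (s * X b a + s * s * X b b)"
      using False by simp
    also have "\<dots> = X a a + X b b + 2 * s * X a b"
      using sym that by simp
    finally show ?thesis .
  qed
  from q[of 1] q[of "-1"] show ?thesis by auto
qed

lemma hermitian_re:
  assumes "finite C" "psd_complex C X" "a \<in> C" "b \<in> C"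
  shows "Re (X a b) = Re (X b a)"
proof (cases "a = b")
  case True then show ?thesis by simp
next
  case False
  let ?z = "\<lambda>x. if x = a then 1 else if x = b then \<i> else (0::complex)"
  have "0 = Im (\<Sum>x\<in>C. \<Sum>y\<in>C. cnj (?z x) * X x y * ?z y)" by (rule conjunct1[OF psd_complexD[OF assms(2)], symmetric])
  also have "\<dots> = Im (\<Sum>x\<in>{a,b}. \<Sum>y\<in>{a,b}. cnj (?z x) * X x y * ?z y)"
    by (subst dsum_restrict[where S="{a,b}"]) (use assms in auto)
  also have "\<dots> = Im (X a a) + Im (X b b) + Re (X a b) - Re (X b a)"
    using False by simp
  finally have 1: "Im (X a a) + Im (X b b) + Re (X a b) - Re (X b a) = 0" by simp
  have d: "Im (X c c) = 0" if "c \<in> C" for c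
  proof -
    let ?z = "\<lambda>x. if x = c then 1 else (0::complex)"
    have "0 = Im (\<Sum>x\<in>C. \<Sum>y\<in>C. cnj (?z x) * X x y * ?z y)" by (rule conjunct1[OF psd_complexD[OF assms(2)], symmetric])
    also have "\<dots> = Im (\<Sum>x\<in>{c}. \<Sum>y\<in>{c}. cnj (?z x) * X x y * ?z y)"
      by (subst dsum_restrict[where S="{c}"]) (use assms that in auto)
    finally show ?thesis by simp
  qed
  show ?thesis using 1 d[OF assms(3)] d[OF assms(4)] by simp
qed

lemma psd_complex_re:
  assumes "finite C" "psd_complex C X"
  shows "psd_real C (\<lambda>a b. Re (X a b))"
  unfolding psd_real_def
proof (intro conjI ballI allI)
  fix a b assume "a \<in> C" "b \<in> C" then show "Re (X a b) = Re (X b a)" by (rule hermitian_re[OF assms])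
next
  fix z :: "'a \<Rightarrow> real"
  have "0 \<le> Re (\<Sum>x\<in>C. \<Sum>y\<in>C. cnj (complex_of_real (z x)) * X x y * complex_of_real (z y))"
    by (rule conjunct2[OF psd_complexD[OF assms(2)]])
  also have "\<dots> = (\<Sum>a\<in>C. \<Sum>b\<in>C. z a * Re (X a b) * z b)"
    unfolding Re_sum by (intro sum.cong refl) (simp add: Re_sum)
  finally show "0 \<le> (\<Sum>a\<in>C. \<Sum>b\<in>C. z a * Re (X a b) * z b)" .
qed

lemma psd_real_complex:
  assumes "finite C" "psd_real C X"
  shows "psd_complex C (\<lambda>a b. complex_of_real (X a b))"
  unfolding psd_complex_def
proof (intro allI conjI)
  fix z :: "'a \<Rightarrow> complex"
  have sym: "\<And>a b. a \<in> C \<Longrightarrow> b \<in> C \<Longrightarrow> X a b = X b a" using assms unfolding psd_real_def by blast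
  have "Im (\<Sum>a\<in>C. \<Sum>b\<in>C. cnj (z a) * complex_of_real (X a b) * z b)
     = (\<Sum>a\<in>C. \<Sum>b\<in>C. X a b * (Re (z a) * Im (z b))) - (\<Sum>a\<in>C. \<Sum>b\<in>C. X a b * (Im (z a) * Re (z b)))"
    by (simp add: Im_sum algebra_simps sum_subtractf)
  also have "(\<Sum>a\<in>C. \<Sum>b\<in>C. X a b * (Im (z a) * Re (z b))) = (\<Sum>b\<in>C. \<Sum>a\<in>C. X a b * (Im (z a) * Re (z b)))"
    by (rule sum.swap)
  also have "\<dots> = (\<Sum>a\<in>C. \<Sum>b\<in>C. X a b * (Re (z a) * Im (z b)))"
    by (intro sum.cong refl) (simp add: sym mult.commute)
  finally show "Im (\<Sum>a\<in>C. \<Sum>b\<in>C. cnj (z a) * complex_of_real (X a b) * z b) = 0" by simp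
  have "Re (\<Sum>a\<in>C. \<Sum>b\<in>C. cnj (z a) * complex_of_real (X a b) * z b)
     = (\<Sum>a\<in>C. \<Sum>b\<in>C. Re (z a) * X a b * Re (z b)) + (\<Sum>a\<in>C. \<Sum>b\<in>C. Im (z a) * X a b * Im (z b))"
    by (simp add: Re_sum algebra_simps sum.distrib)
  moreover have "0 \<le> (\<Sum>a\<in>C. \<Sum>b\<in>C. Re (z a) * X a b * Re (z b))" "0 \<le> (\<Sum>a\<in>C. \<Sum>b\<in>C. Im (z a) * X a b * Im (z b))"
    by (rule psd_realD[OF assms(2)])+
  ultimately show "0 \<le> Re (\<Sum>a\<in>C. \<Sum>b\<in>C. cnj (z a) * complex_of_real (X a b) * z b)" by simp
qed



lemma finite_subseq:
  fixes f :: "nat \<Rightarrow> 'a \<Rightarrow> real"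
  assumes "finite S" "\<And>p. p \<in> S \<Longrightarrow> \<exists>B. \<forall>k. \<bar>f k p\<bar> \<le> B"
  shows "\<exists>s. strict_mono s \<and> (\<forall>p\<in>S. convergent (\<lambda>k. f (s k) p))"
  using assms
proof (induction S rule: finite_induct)
  case empty
  show ?case by (rule exI[of _ id]) (simp add: strict_mono_def)
next
  case (insert p S)
  then obtain s where s: "strict_mono s" "\<forall>q\<in>S. convergent (\<lambda>k. f (s k) q)" by blast
  obtain B where B: "\<forall>k. \<bar>f k p\<bar> \<le> B" using insert.prems by blast
  have "bounded (range (\<lambda>k. f (s k) p))"
    by (rule boundedI[of _ B]) (use B in auto)
  then obtain l t where t: "strict_mono t" "((\<lambda>k. f (s k) p) \<circ> t) \<longlonglongrightarrow> l"
    using bounded_imp_convergent_subsequence by blast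
  have "strict_mono (s \<circ> t)" by (rule strict_mono_o[OF s(1) t(1)])
  moreover have "\<forall>q\<in>insert p S. convergent (\<lambda>k. f ((s \<circ> t) k) q)"
  proof
    fix q assume "q \<in> insert p S"
    then show "convergent (\<lambda>k. f ((s \<circ> t) k) q)"
    proof
      assume "q = p" then show ?thesis using t by (auto simp: convergent_def o_def)
    next
      assume "q \<in> S"
      then have "convergent ((\<lambda>k. f (s k) q) \<circ> t)" using s t convergent_subseq_convergent by blast
      then show ?thesis by (simp add: o_def)
    qed
  qed
  ultimately show ?case by blast
qed

definition feas :: "'v set \<Rightarrow> ('v \<Rightarrow> 'v \<Rightarrow> real) \<Rightarrow> ('v \<Rightarrow> 'v \<Rightarrow> real) \<Rightarrow> bool" where
  "feas C X Y \<longleftrightarrow> psd_real C X \<and> psd_real C Y \<and>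
       (\<forall>c1\<in>C. \<forall>c2\<in>C. c1 \<noteq> c2 \<longrightarrow> X c1 c2 - Y c1 c2 = 1)"

lemma feas_nonempty: "feas C (\<lambda>a b. 1) (\<lambda>a b. 0)"
proof -
  have "psd_real C (\<lambda>a b. 1)"
    unfolding psd_real_def
  proof (intro conjI ballI allI)
    fix z :: "'a \<Rightarrow> real"
    have "(\<Sum>a\<in>C. \<Sum>b\<in>C. z a * 1 * z b) = (\<Sum>a\<in>C. z a) * (\<Sum>a\<in>C. z a)"
      by (simp add: sum_product)
    then show "0 \<le> (\<Sum>a\<in>C. \<Sum>b\<in>C. z a * 1 * z b)" by simp
  qed simp
  moreover have "psd_real C (\<lambda>a b. 0)" unfolding psd_real_def by simp
  ultimately show ?thesis unfolding feas_def by simp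
qed

lemma sdp_value_alt:
  "sdp_value C w = Inf {Max ((\<lambda>c. w c + X c c + Y c c) ` C) | X Y. feas C X Y}"
  unfolding sdp_value_def feas_def by simp

lemma sdp_lower:
  assumes "finite C" "C \<noteq> {}" "feas C X Y"
  shows "sdp_value C w \<le> Max ((\<lambda>c. w c + X c c + Y c c) ` C)"
proof -
  obtain c0 where c0: "c0 \<in> C" using assms(2) by blast
  have "bdd_below {Max ((\<lambda>c. w c + X c c + Y c c) ` C) | X Y. feas C X Y}"
  proof (rule bdd_belowI)
    fix m assume "m \<in> {Max ((\<lambda>c. w c + X c c + Y c c) ` C) | X Y. feas C X Y}"
    then obtain X' Y' where m: "m = Max ((\<lambda>c. w c + X' c c + Y' c c) ` C)" "feas C X' Y'" by blast
    have "w c0 + X' c0 c0 + Y' c0 c0 \<le> m" unfolding m(1) using assms(1) c0 by (intro Max_ge) simp_all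
    moreover have "psd_real C X'" "psd_real C Y'" using m(2) unfolding feas_def by auto
    then have "0 \<le> X' c0 c0" "0 \<le> Y' c0 c0" using psd_diag[OF assms(1) _ c0] by auto
    ultimately show "w c0 \<le> m" by linarith
  qed
  then show ?thesis unfolding sdp_value_alt using assms(3) by (intro cInf_lower) auto
qed

lemma sdp_attained:
  assumes "finite C" "C \<noteq> {}"
  shows "\<exists>X Y. feas C X Y \<and> (\<forall>c\<in>C. a c + X c c + Y c c \<le> sdp_value C a)"
proof -
  define S where "S = {Max ((\<lambda>c. a c + X c c + Y c c) ` C) | X Y. feas C X Y}"
  define V0 where "V0 = sdp_value C a"
  have V0: "V0 = Inf S" unfolding V0_def S_def sdp_value_alt ..
  have Sne: "S \<noteq> {}" unfolding S_def using feas_nonempty by blast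
  have "\<forall>k. \<exists>XY. feas C (fst XY) (snd XY) \<and> (\<forall>c\<in>C. a c + fst XY c c + snd XY c c < V0 + inverse (real (Suc k)))"
  proof
    fix k
    have "Inf S < V0 + inverse (real (Suc k))" using V0 by simp
    then obtain m where "m \<in> S" "m < V0 + inverse (real (Suc k))" using cInf_lessD[OF Sne] by blast
    then obtain X Y where m: "m = Max ((\<lambda>c. a c + X c c + Y c c) ` C)" "feas C X Y"
      unfolding S_def by blast
    have "\<forall>c\<in>C. a c + X c c + Y c c < V0 + inverse (real (Suc k))"
    proof
      fix c assume "c \<in> C"
      then have "a c + X c c + Y c c \<le> m" unfolding m(1) using assms(1) by (intro Max_ge) simp_all
      then show "a c + X c c + Y c c < V0 + inverse (real (Suc k))" using \<open>m < _\<close> by linarith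
    qed
    then show "\<exists>XY. feas C (fst XY) (snd XY) \<and> (\<forall>c\<in>C. a c + fst XY c c + snd XY c c < V0 + inverse (real (Suc k)))"
      using m(2) by (intro exI[of _ "(X,Y)"]) simp
  qed
  from choice[OF this] obtain XY where XYa: "\<forall>k. feas C (fst (XY k)) (snd (XY k)) \<and> (\<forall>c\<in>C. a c + fst (XY k) c c + snd (XY k) c c < V0 + inverse (real (Suc k)))"
    by blast
  have XY: "\<And>k. feas C (fst (XY k)) (snd (XY k))"
     "\<And>k c. c \<in> C \<Longrightarrow> a c + fst (XY k) c c + snd (XY k) c c < V0 + inverse (real (Suc k))"
    using XYa by blast+
  define Xs where "Xs k = fst (XY k)" for k
  define Ys where "Ys k = snd (XY k)" for k
  have feask: "feas C (Xs k) (Ys k)" for k using XY(1) unfolding Xs_def Ys_def .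
  have psdX: "psd_real C (Xs k)" and psdY: "psd_real C (Ys k)" for k using feask unfolding feas_def by auto
  have obj: "a c + Xs k c c + Ys k c c < V0 + 1" if "c \<in> C" for c k
  proof -
    have "inverse (real (Suc k)) \<le> 1" by (simp add: inverse_le_1_iff)
    then show ?thesis using XY(2)[OF that, of k] unfolding Xs_def Ys_def by linarith
  qed
  have diagX: "Xs k c c \<le> V0 + 1 - a c" if "c \<in> C" for c k
    using obj[OF that, of k] psd_diag[OF assms(1) psdY that, of k] by linarith
  have diagY: "Ys k c c \<le> V0 + 1 - a c" if "c \<in> C" for c k
    using obj[OF that, of k] psd_diag[OF assms(1) psdX that, of k] by linarith
  define f where "f k p = (if fst p then Xs k (fst (snd p)) (snd (snd p)) else Ys k (fst (snd p)) (snd (snd p)))" for k p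
  have "\<exists>s. strict_mono s \<and> (\<forall>p\<in>(UNIV::bool set) \<times> C \<times> C. convergent (\<lambda>k. f (s k) p))"
  proof (rule finite_subseq)
    show "finite ((UNIV::bool set) \<times> C \<times> C)" using assms(1) by simp
  next
    fix p assume p: "p \<in> (UNIV::bool set) \<times> C \<times> C"
    obtain t x y where pe: "p = (t, x, y)" "x \<in> C" "y \<in> C" using p by auto
    show "\<exists>B. \<forall>k. \<bar>f k p\<bar> \<le> B"
    proof (intro exI allI)
      fix k
      have "\<bar>Xs k x y\<bar> \<le> (Xs k x x + Xs k y y) / 2" by (rule psd_off[OF assms(1) psdX pe(2,3)])
      moreover have "\<bar>Ys k x y\<bar> \<le> (Ys k x x + Ys k y y) / 2" by (rule psd_off[OF assms(1) psdY pe(2,3)])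
      moreover have "f k p = (if t then Xs k x y else Ys k x y)" unfolding f_def pe(1) by simp
      moreover have "(V0 + 1 - a x + (V0 + 1 - a y)) / 2 \<ge> (Xs k x x + Xs k y y) / 2"
        using diagX[OF pe(2), of k] diagX[OF pe(3), of k] by (intro divide_right_mono add_mono) simp_all
      moreover have "(V0 + 1 - a x + (V0 + 1 - a y)) / 2 \<ge> (Ys k x x + Ys k y y) / 2"
        using diagY[OF pe(2), of k] diagY[OF pe(3), of k] by (intro divide_right_mono add_mono) simp_all
      ultimately show "\<bar>f k p\<bar> \<le> (V0 + 1 - a x + (V0 + 1 - a y)) / 2"
        by (cases t) simp_all
    qed
  qed
  then obtain s where s: "strict_mono s" "\<And>t x y. x \<in> C \<Longrightarrow> y \<in> C \<Longrightarrow> convergent (\<lambda>k. f (s k) (t, x, y))"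
    by blast
  define X where "X x y = lim (\<lambda>k. Xs (s k) x y)" for x y
  define Y where "Y x y = lim (\<lambda>k. Ys (s k) x y)" for x y
  have limX: "(\<lambda>k. Xs (s k) x y) \<longlonglongrightarrow> X x y" if "x \<in> C" "y \<in> C" for x y
    using s(2)[OF that, of True] unfolding X_def f_def by (simp add: convergent_LIMSEQ_iff)
  have limY: "(\<lambda>k. Ys (s k) x y) \<longlonglongrightarrow> Y x y" if "x \<in> C" "y \<in> C" for x y
    using s(2)[OF that, of False] unfolding Y_def f_def by (simp add: convergent_LIMSEQ_iff)
  have psd_lim: "psd_real C M"
    if psdk: "\<And>k. psd_real C (Ms k)" and lim: "\<And>x y. x \<in> C \<Longrightarrow> y \<in> C \<Longrightarrow> (\<lambda>k. Ms (s k) x y) \<longlonglongrightarrow> M x y"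
    for Ms :: "nat \<Rightarrow> 'a \<Rightarrow> 'a \<Rightarrow> real" and M
    unfolding psd_real_def
  proof (intro conjI ballI allI)
    fix x y assume xy: "x \<in> C" "y \<in> C"
    have "(\<lambda>k. Ms (s k) y x) \<longlonglongrightarrow> M x y"
      using lim[OF xy] psd_realS[OF psdk xy] by simp
    then show "M x y = M y x" using lim[OF xy(2,1)] LIMSEQ_unique by blast
  next
    fix z :: "'a \<Rightarrow> real"
    have "(\<lambda>k. \<Sum>x\<in>C. \<Sum>y\<in>C. z x * Ms (s k) x y * z y) \<longlonglongrightarrow> (\<Sum>x\<in>C. \<Sum>y\<in>C. z x * M x y * z y)"
      by (intro tendsto_sum tendsto_mult tendsto_const lim)
    then show "0 \<le> (\<Sum>x\<in>C. \<Sum>y\<in>C. z x * M x y * z y)"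
      by (rule LIMSEQ_le_const) (use psd_realD[OF psdk] in blast)
  qed
  have "feas C X Y"
    unfolding feas_def
  proof (intro conjI ballI impI)
    show "psd_real C X" by (rule psd_lim[OF psdX limX])
    show "psd_real C Y" by (rule psd_lim[OF psdY limY])
  next
    fix c1 c2 assume c: "c1 \<in> C" "c2 \<in> C" "c1 \<noteq> c2"
    have "(\<lambda>k. Xs (s k) c1 c2 - Ys (s k) c1 c2) \<longlonglongrightarrow> X c1 c2 - Y c1 c2"
      by (intro tendsto_diff limX limY c)
    moreover have "(\<lambda>k. Xs (s k) c1 c2 - Ys (s k) c1 c2) = (\<lambda>k. 1)"
      using feask c unfolding feas_def by auto
    ultimately have "(\<lambda>k. 1::real) \<longlonglongrightarrow> X c1 c2 - Y c1 c2" by simp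
    then show "X c1 c2 - Y c1 c2 = 1" using LIMSEQ_unique[OF _ tendsto_const] by blast
  qed
  moreover have "\<forall>c\<in>C. a c + X c c + Y c c \<le> V0"
  proof
    fix c assume c: "c \<in> C"
    have 1: "(\<lambda>k. a c + Xs (s k) c c + Ys (s k) c c) \<longlonglongrightarrow> a c + X c c + Y c c"
      by (intro tendsto_add tendsto_const limX limY c)
    have 2: "(\<lambda>k. V0 + inverse (real (Suc k))) \<longlonglongrightarrow> V0 + 0"
      by (intro tendsto_add tendsto_const LIMSEQ_inverse_real_of_nat)
    have "a c + Xs (s k) c c + Ys (s k) c c \<le> V0 + inverse (real (Suc k))" for k
    proof -
      have "k \<le> s k" using seq_suble[OF s(1)] .
      then have "inverse (real (Suc (s k))) \<le> inverse (real (Suc k))"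
        by (simp add: field_simps)
      then show ?thesis using XY(2)[OF c, of "s k"] unfolding Xs_def Ys_def by linarith
    qed
    then show "a c + X c c + Y c c \<le> V0" using LIMSEQ_le[OF 1 2] by simp
  qed
  ultimately show ?thesis unfolding V0_def by blast
qed



lemma tree_wf:
  assumes "rooted_tree V r ch"
  shows "wf {(b, a). a \<in> V \<and> b \<in> ch a}"
proof -
  define E where "E = {(a, b). a \<in> V \<and> b \<in> ch a}"
  have fin: "finite V" and rV: "r \<in> V" and sub: "\<And>v. v \<in> V \<Longrightarrow> ch v \<subseteq> V"
    and nr: "\<And>v. v \<in> V \<Longrightarrow> r \<notin> ch v"
    and uq: "\<And>u. u \<in> V - {r} \<Longrightarrow> \<exists>!p. p \<in> V \<and> u \<in> ch p"
    and reach: "\<And>v. v \<in> V \<Longrightarrow> (r, v) \<in> E\<^sup>*"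
    using assms unfolding rooted_tree_def E_def by blast+
  have EV: "E \<subseteq> V \<times> V" unfolding E_def using sub by blast
  have finE: "finite E" using finite_subset[OF EV] fin by blast
  have noloop: "(v, v) \<notin> E\<^sup>+" if "(r, v) \<in> E\<^sup>*" for v
    using that
  proof (induction rule: rtrancl_induct)
    case base
    show ?case
    proof
      assume "(r, r) \<in> E\<^sup>+"
      then obtain z where "(z, r) \<in> E" using tranclD2 by metis
      then show False using nr unfolding E_def by blast
    qed
  next
    case (step u v)
    show ?case
    proof
      assume "(v, v) \<in> E\<^sup>+"
      then obtain y where y: "(v, y) \<in> E\<^sup>*" "(y, v) \<in> E" using tranclD2 by metis
      have uv: "u \<in> V" "v \<in> ch u" using step(2) unfolding E_def by auto
      have vV: "v \<in> V - {r}" using uv sub nr by blast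
      have "y \<in> V" "v \<in> ch y" using y(2) unfolding E_def by auto
      then have "y = u" using uq[OF vV] uv by blast
      then have "(u, u) \<in> E\<^sup>+" using rtrancl_into_trancl2[OF step(2)] y(1) by simp
      then show False using step(3) by blast
    qed
  qed
  have "acyclic E"
    unfolding acyclic_def
  proof
    fix v show "(v, v) \<notin> E\<^sup>+"
    proof
      assume a: "(v, v) \<in> E\<^sup>+"
      then obtain y where "(y, v) \<in> E" using tranclD2 by metis
      then have "v \<in> V" using sub unfolding E_def by blast
      then show False using noloop[OF reach] a by blast
    qed
  qed
  then have "wf (E\<inverse>)" using finE by (intro finite_acyclic_wf_converse)
  moreover have "E\<inverse> = {(b, a). a \<in> V \<and> b \<in> ch a}" unfolding E_def by auto
  ultimately show ?thesis by simp
qed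

lemma tree_induct:
  assumes "rooted_tree V r ch" "v \<in> V"
    and "\<And>v. v \<in> V \<Longrightarrow> (\<And>c. c \<in> ch v \<Longrightarrow> P c) \<Longrightarrow> P v"
  shows "P v"
proof -
  have "\<forall>v. v \<in> V \<longrightarrow> P v"
  proof
    fix v
    show "v \<in> V \<longrightarrow> P v"
      using tree_wf[OF assms(1)]
    proof (induction v rule: wf_induct_rule)
      case (less x)
      show ?case
      proof
        assume xV: "x \<in> V"
        show "P x"
        proof (rule assms(3)[OF xV])
          fix c assume "c \<in> ch x"
          moreover have "ch x \<subseteq> V" using assms(1) xV unfolding rooted_tree_def by blast
          ultimately show "P c" using less xV by blast
        qed
      qed
    qed
  qed
  then show ?thesis using assms(2) by blast
qed



theorem theorem6p3:
  fixes V :: "'v set" and r :: 'v and ch :: "'v \<Rightarrow> 'v set" and w :: "'v \<Rightarrow> real"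
  assumes "rooted_tree V r ch"
    and "\<forall>v\<in>V. is_leaf ch v \<longrightarrow> w v = 0"
    and "\<forall>v\<in>V. \<not> is_leaf ch v \<longrightarrow> w v = sdp_value (ch v) w"
  shows "weighting_scheme V ch w \<and> w r = WDT V r ch"
proof -
  have fin: "finite V" and rV: "r \<in> V" and sub: "\<And>v. v \<in> V \<Longrightarrow> ch v \<subseteq> V"
    using assms(1) unfolding rooted_tree_def by blast+
  have chfin: "\<And>v. v \<in> V \<Longrightarrow> finite (ch v)" using fin sub finite_subset by blast
  have att: "\<exists>X Y. feas (ch v) X Y \<and> (\<forall>c\<in>ch v. w c + X c c + Y c c \<le> w v)"
    if "v \<in> V" "\<not> is_leaf ch v" for v
  proof -
    have "ch v \<noteq> {}" using that(2) unfolding is_leaf_def .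
    from sdp_attained[OF chfin[OF that(1)] this, of w] show ?thesis
      using assms(3) that by simp
  qed
  have nonneg: "0 \<le> w v" if "v \<in> V" for v
    using assms(1) that
  proof (rule tree_induct)
    fix v assume vV: "v \<in> V" and IH: "\<And>c. c \<in> ch v \<Longrightarrow> 0 \<le> w c"
    show "0 \<le> w v"
    proof (cases "is_leaf ch v")
      case True then show ?thesis using assms(2) vV by simp
    next
      case False
      then obtain c where c: "c \<in> ch v" unfolding is_leaf_def by blast
      obtain X Y where XY: "feas (ch v) X Y" "\<forall>c\<in>ch v. w c + X c c + Y c c \<le> w v"
        using att[OF vV False] by blast
      have "0 \<le> X c c" "0 \<le> Y c c" using XY(1) psd_diag[OF chfin[OF vV] _ c] unfolding feas_def by auto
      moreover have "w c + X c c + Y c c \<le> w v" using XY(2) c by blast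
      ultimately show ?thesis using IH[OF c] by linarith
    qed
  qed
  have ws: "weighting_scheme V ch w"
    unfolding weighting_scheme_def
  proof (intro conjI ballI impI)
    fix v assume "v \<in> V" then show "0 \<le> w v" by (rule nonneg)
  next
    fix v assume "v \<in> V" "is_leaf ch v" then show "w v = 0" using assms(2) by blast
  next
    fix v assume vV: "v \<in> V" and nl: "\<not> is_leaf ch v"
    obtain X Y where XY: "feas (ch v) X Y" "\<forall>c\<in>ch v. w c + X c c + Y c c \<le> w v"
      using att[OF vV nl] by blast
    have p: "psd_real (ch v) X" "psd_real (ch v) Y" using XY(1) unfolding feas_def by auto
    show "\<exists>X Y. psd_complex (ch v) X \<and> psd_complex (ch v) Y \<and>
           (\<forall>c1\<in>ch v. \<forall>c2\<in>ch v. c1 \<noteq> c2 \<longrightarrow> X c1 c2 - Y c1 c2 = 1) \<and>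
           (\<forall>c\<in>ch v. Re (X c c) + Re (Y c c) \<le> w v - w c)"
    proof (intro exI conjI ballI impI)
      show "psd_complex (ch v) (\<lambda>a b. complex_of_real (X a b))"
        by (rule psd_real_complex[OF chfin[OF vV] p(1)])
      show "psd_complex (ch v) (\<lambda>a b. complex_of_real (Y a b))"
        by (rule psd_real_complex[OF chfin[OF vV] p(2)])
    next
      fix c1 c2 assume "c1 \<in> ch v" "c2 \<in> ch v" "c1 \<noteq> c2"
      then have "X c1 c2 - Y c1 c2 = 1" using XY(1) unfolding feas_def by blast
      then show "complex_of_real (X c1 c2) - complex_of_real (Y c1 c2) = 1"
        by (metis of_real_1 of_real_diff)
    next
      fix c assume "c \<in> ch v"
      then have "w c + X c c + Y c c \<le> w v" using XY(2) by blast
      then show "Re (complex_of_real (X c c)) + Re (complex_of_real (Y c c)) \<le> w v - w c"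
        by simp
    qed
  qed
  have wsD1: "w' v = 0" if "weighting_scheme V ch w'" "v \<in> V" "is_leaf ch v" for w' v
    using that unfolding weighting_scheme_def by blast
  have wsD2: "\<exists>X Y. psd_complex (ch v) X \<and> psd_complex (ch v) Y \<and>
           (\<forall>c1\<in>ch v. \<forall>c2\<in>ch v. c1 \<noteq> c2 \<longrightarrow> X c1 c2 - Y c1 c2 = 1) \<and>
           (\<forall>c\<in>ch v. Re (X c c) + Re (Y c c) \<le> w' v - w' c)"
    if "weighting_scheme V ch w'" "v \<in> V" "\<not> is_leaf ch v" for w' v
  proof -
    have "\<forall>v\<in>V. \<not> is_leaf ch v \<longrightarrow> (\<exists>X Y. psd_complex (ch v) X \<and> psd_complex (ch v) Y \<and>
           (\<forall>c1\<in>ch v. \<forall>c2\<in>ch v. c1 \<noteq> c2 \<longrightarrow> X c1 c2 - Y c1 c2 = 1) \<and>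
           (\<forall>c\<in>ch v. Re (X c c) + Re (Y c c) \<le> w' v - w' c))"
      using that(1) unfolding weighting_scheme_def by (rule conjunct2[OF conjunct2])
    then show ?thesis using that(2,3) by blast
  qed
  have minimal: "w v \<le> w' v" if wsp: "weighting_scheme V ch w'" and vV0: "v \<in> V" for w' v
    using assms(1) vV0
  proof (rule tree_induct)
    fix v assume vV: "v \<in> V" and IH: "\<And>c. c \<in> ch v \<Longrightarrow> w c \<le> w' c"
    show "w v \<le> w' v"
    proof (cases "is_leaf ch v")
      case True then show ?thesis using assms(2) vV wsD1[OF wsp vV True] by simp
    next
      case False
      then obtain Xc Yc where XY: "psd_complex (ch v) Xc" "psd_complex (ch v) Yc"
           "\<forall>c1\<in>ch v. \<forall>c2\<in>ch v. c1 \<noteq> c2 \<longrightarrow> Xc c1 c2 - Yc c1 c2 = 1"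
           "\<forall>c\<in>ch v. Re (Xc c c) + Re (Yc c c) \<le> w' v - w' c"
        using wsD2[OF wsp vV False] by blast
      define X where "X a b = Re (Xc a b)" for a b
      define Y where "Y a b = Re (Yc a b)" for a b
      have "feas (ch v) X Y"
        unfolding feas_def
      proof (intro conjI ballI impI)
        show "psd_real (ch v) X" unfolding X_def by (rule psd_complex_re[OF chfin[OF vV] XY(1)])
        show "psd_real (ch v) Y" unfolding Y_def by (rule psd_complex_re[OF chfin[OF vV] XY(2)])
      next
        fix c1 c2 assume "c1 \<in> ch v" "c2 \<in> ch v" "c1 \<noteq> c2"
        then have "Xc c1 c2 - Yc c1 c2 = 1" using XY(3) by blast
        then have "Re (Xc c1 c2 - Yc c1 c2) = 1" by simp
        then show "X c1 c2 - Y c1 c2 = 1" unfolding X_def Y_def by simp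
      qed
      have ne: "ch v \<noteq> {}" using False unfolding is_leaf_def .
      have "w v = sdp_value (ch v) w" using assms(3) vV False by blast
      also have "\<dots> \<le> Max ((\<lambda>c. w c + X c c + Y c c) ` ch v)"
        by (rule sdp_lower[OF chfin[OF vV] ne \<open>feas (ch v) X Y\<close>])
      also have "\<dots> \<le> w' v"
      proof (subst Max_le_iff)
        show "finite ((\<lambda>c. w c + X c c + Y c c) ` ch v)" using chfin[OF vV] by simp
        show "(\<lambda>c. w c + X c c + Y c c) ` ch v \<noteq> {}" using ne by simp
        show "\<forall>a\<in>(\<lambda>c. w c + X c c + Y c c) ` ch v. a \<le> w' v"
        proof
          fix a assume "a \<in> (\<lambda>c. w c + X c c + Y c c) ` ch v"
          then obtain c where c: "c \<in> ch v" "a = w c + X c c + Y c c" by blast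
          have "X c c + Y c c \<le> w' v - w' c" using XY(4) c(1) unfolding X_def Y_def by blast
          then show "a \<le> w' v" using IH[OF c(1)] c(2) by linarith
        qed
      qed
      finally show ?thesis .
    qed
  qed
  have "WDT V r ch = w r"
    unfolding WDT_def
  proof (rule cInf_eq_minimum)
    show "w r \<in> {w' r | w'. weighting_scheme V ch w'}" using ws by blast
  next
    fix x assume "x \<in> {w' r | w'. weighting_scheme V ch w'}"
    then obtain w' where "x = w' r" "weighting_scheme V ch w'" by blast
    then show "w r \<le> x" using minimal rV by blast
  qed
  then show ?thesis using ws by simp
qed


end
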